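(* If $T$ is a tree of order $n \ge 2$ with no strong support vertex, then $\gamma_{\rm gr}^t(T) \ge \frac{2}{3}(n+1)$, with equality if and only if $T \in \mathcal{T}$.
   Context: A leaf is a vertex of degree $1$, a support vertex is a vertex adjacent to a leaf, and a strong support vertex is a vertex adjacent to at least two leaves. Operation $\mathcal{O}_1$: given a tree $T'$ and a support vertex $v$ of $T'$, add a new path $v_1v_2v_3$ (three new vertices) and the edge $vv_1$. The family $\mathcal{T}$ is the smallest family of trees containing the path $P_2$ and closed under operation $\mathcal{O}_1$. $N(v)$ denotes the open neighborhood of $v$. A sequence $S=(v_1,\ldots,v_k)$ of distinct vertices of a graph $G$ without isolated vertices is a legal sequence if $N(v_i)\setminus \bigcup_{j=1}^{i-1} N(v_j)\neq\emptyset$ for every $i\in\{2,\ldots,k\}$, and a total dominating sequence if moreover $\{v_1,\ldots,v_k\}$ is a total dominating set of $G$. $\gamma_{\rm gr}^t(G)$ is the maximum length of a total dominating sequence of $G$. *)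

theory Defs
  imports Complex_Main
begin

definition graph :: "'a set \<Rightarrow> 'a set set \<Rightarrow> bool" where
  "graph V E \<longleftrightarrow> finite V \<and> (\<forall>e\<in>E. e \<subseteq> V \<and> card e = 2)"

definition nbhd :: "'a set set \<Rightarrow> 'a \<Rightarrow> 'a set" where
  "nbhd E v = {u. {u, v} \<in> E}"

definition adj :: "'a set set \<Rightarrow> 'a \<Rightarrow> 'a \<Rightarrow> bool" where
  "adj E u v \<longleftrightarrow> {u, v} \<in> E"

definition connected_graph :: "'a set \<Rightarrow> 'a set set \<Rightarrow> bool" where
  "connected_graph V E \<longleftrightarrow> (\<forall>u\<in>V. \<forall>v\<in>V. (adj E)\<^sup>*\<^sup>* u v)"

definition is_tree :: "'a set \<Rightarrow> 'a set set \<Rightarrow> bool" where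
  "is_tree V E \<longleftrightarrow> graph V E \<and> V \<noteq> {} \<and> connected_graph V E \<and> card E = card V - 1"

definition leaf :: "'a set set \<Rightarrow> 'a \<Rightarrow> bool" where
  "leaf E v \<longleftrightarrow> card (nbhd E v) = 1"

definition support_vertex :: "'a set set \<Rightarrow> 'a \<Rightarrow> bool" where
  "support_vertex E v \<longleftrightarrow> (\<exists>u\<in>nbhd E v. leaf E u)"

definition strong_support_vertex :: "'a set set \<Rightarrow> 'a \<Rightarrow> bool" where
  "strong_support_vertex E v \<longleftrightarrow> card {u\<in>nbhd E v. leaf E u} \<ge> 2"

text \<open>The family \<T>: contains P2 and is closed under operation O1.
  Vertices are labelled by elements of 'a; the family is isomorphism-closed
  because the labels are arbitrary.\<close>
inductive in_family_T :: "'a set \<Rightarrow> 'a set set \<Rightarrow> bool" where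
  P2: "a \<noteq> b \<Longrightarrow> in_family_T {a, b} {{a, b}}"
| O1: "\<lbrakk> in_family_T V E; v \<in> V; support_vertex E v;
        v1 \<notin> V; v2 \<notin> V; v3 \<notin> V; v1 \<noteq> v2; v1 \<noteq> v3; v2 \<noteq> v3 \<rbrakk>
      \<Longrightarrow> in_family_T (V \<union> {v1, v2, v3}) (E \<union> {{v, v1}, {v1, v2}, {v2, v3}})"

definition legal_sequence :: "'a set \<Rightarrow> 'a set set \<Rightarrow> 'a list \<Rightarrow> bool" where
  "legal_sequence V E S \<longleftrightarrow> distinct S \<and> set S \<subseteq> V \<and>
     (\<forall>i. 1 \<le> i \<and> i < length S \<longrightarrow>
        nbhd E (S ! i) - (\<Union>j<i. nbhd E (S ! j)) \<noteq> {})"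

definition total_dominating_set :: "'a set \<Rightarrow> 'a set set \<Rightarrow> 'a set \<Rightarrow> bool" where
  "total_dominating_set V E D \<longleftrightarrow> D \<subseteq> V \<and> (\<forall>v\<in>V. \<exists>d\<in>D. d \<in> nbhd E v)"

definition total_dominating_sequence :: "'a set \<Rightarrow> 'a set set \<Rightarrow> 'a list \<Rightarrow> bool" where
  "total_dominating_sequence V E S \<longleftrightarrow>
     legal_sequence V E S \<and> total_dominating_set V E (set S)"

definition grundy_total_domination :: "'a set \<Rightarrow> 'a set set \<Rightarrow> nat" where
  "grundy_total_domination V E = Max {length S | S. total_dominating_sequence V E S}"

end

theory Submission
  imports Defs
begin


fun lgN :: "('a \<Rightarrow> 'a set) \<Rightarrow> 'a set \<Rightarrow> 'a list \<Rightarrow> bool" where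
  "lgN N C [] = True"
| "lgN N C (x#xs) = (N x - C \<noteq> {} \<and> lgN N (C \<union> N x) xs)"

lemma lgN_append: "lgN N C (xs @ ys) = (lgN N C xs \<and> lgN N (C \<union> \<Union>(N ` set xs)) ys)"
  by (induction xs arbitrary: C) (auto simp: Un_assoc)

lemma lgN_mem: "lgN N C xs \<Longrightarrow> x \<in> set xs \<Longrightarrow> N x - C \<noteq> {}"
  by (induction xs arbitrary: C) auto

lemma lgN_distinct: "lgN N C xs \<Longrightarrow> distinct xs"
proof (induction xs arbitrary: C)
  case (Cons x xs)
  have "x \<notin> set xs"
  proof
    assume xs: "x \<in> set xs"
    have "lgN N (C \<union> N x) xs" using Cons.prems by simp
    from lgN_mem[OF this xs] show False by auto
  qed
  then show ?case using Cons.IH[of "C \<union> N x"] Cons.prems by simp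
qed simp

lemma UN_less_Suc_shift: "(\<Union>j<Suc k. f j) = f 0 \<union> (\<Union>j<k. f (Suc j))"
  by (auto simp: less_Suc_eq_0_disj)

lemma lgN_index: "lgN N C S \<longleftrightarrow> (\<forall>i<length S. N (S!i) - C - (\<Union>j<i. N (S!j)) \<noteq> {})"
proof (induction S arbitrary: C)
  case Nil
  then show ?case by simp
next
  case (Cons x xs)
  have "(\<forall>i<length (x#xs). N ((x#xs)!i) - C - (\<Union>j<i. N ((x#xs)!j)) \<noteq> {})
     \<longleftrightarrow> (N x - C \<noteq> {} \<and> (\<forall>k<length xs. N ((x#xs)!Suc k) - C - (\<Union>j<Suc k. N ((x#xs)!j)) \<noteq> {}))"
    by (simp add: All_less_Suc2)
  also have "\<dots> \<longleftrightarrow> (N x - C \<noteq> {} \<and> (\<forall>k<length xs. N (xs!k) - (C \<union> N x) - (\<Union>j<k. N (xs!j)) \<noteq> {}))"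
    by (simp only: UN_less_Suc_shift nth_Cons_0 nth_Cons_Suc Diff_Un Un_Diff_Int) (auto simp: set_diff_eq)
  finally show ?case using Cons.IH by simp
qed

lemma lgN_footprint: "lgN N C S \<Longrightarrow> \<exists>f. inj_on f (set S) \<and> (\<forall>z\<in>set S. f z \<in> N z \<and> f z \<notin> C)"
proof (induction S arbitrary: C)
  case Nil
  then show ?case by auto
next
  case (Cons x xs)
  then obtain y where y: "y \<in> N x" "y \<notin> C" and r: "lgN N (C \<union> N x) xs" by auto
  from Cons.IH[OF r] obtain f where f: "inj_on f (set xs)" "\<forall>z\<in>set xs. f z \<in> N z \<and> f z \<notin> C \<union> N x" by blast
  have xn: "x \<notin> set xs" using lgN_distinct[OF Cons.prems] by simp
  let ?g = "f(x := y)"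
  have "inj_on ?g (set (x#xs))"
    using f xn y by (auto simp: inj_on_def)
  moreover have "\<forall>z\<in>set (x#xs). ?g z \<in> N z \<and> ?g z \<notin> C" using f xn y by auto
  ultimately show ?case by blast
qed

lemma lgN_mono:
  assumes "lgN N' C' S" "\<forall>z\<in>set S. N' z \<subseteq> N z \<and> N z \<subseteq> N' z \<union> X \<and> N' z \<inter> X = {}"
    "C \<subseteq> C' \<union> X"
  shows "lgN N C S"
  using assms
proof (induction S arbitrary: C C')
  case Nil
  then show ?case by simp
next
  case (Cons x xs)
  from Cons.prems obtain a where a: "a \<in> N' x" "a \<notin> C'" by auto
  have "a \<notin> X" using a Cons.prems(2) by auto
  then have "a \<in> N x - C" using a Cons.prems by auto
  moreover have "lgN N (C \<union> N x) xs"
    using Cons.IH[of "C' \<union> N' x" "C \<union> N x"] Cons.prems by auto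
  ultimately show ?case by auto
qed

lemma nbhd_sym: "u \<in> nbhd E v \<longleftrightarrow> v \<in> nbhd E u"
  by (simp add: nbhd_def insert_commute)

lemma nbhd_sub: "graph V E \<Longrightarrow> nbhd E v \<subseteq> V"
  unfolding graph_def nbhd_def by auto

lemma nbhd_irrefl: "graph V E \<Longrightarrow> v \<notin> nbhd E v"
  unfolding graph_def nbhd_def by force

lemma graph_finite_nbhd: "graph V E \<Longrightarrow> finite (nbhd E v)"
  using nbhd_sub[of V E v] unfolding graph_def by (auto intro: finite_subset)

lemma legal_iff:
  assumes "graph V E" "\<forall>v\<in>V. nbhd E v \<noteq> {}"
  shows "legal_sequence V E S \<longleftrightarrow> (set S \<subseteq> V \<and> lgN (nbhd E) {} S)"
proof
  assume L: "legal_sequence V E S"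
  have sub: "set S \<subseteq> V" and cond: "\<forall>i. 1 \<le> i \<and> i < length S \<longrightarrow>
        nbhd E (S ! i) - (\<Union>j<i. nbhd E (S ! j)) \<noteq> {}" using L unfolding legal_sequence_def by auto
  have "\<forall>i<length S. nbhd E (S!i) - {} - (\<Union>j<i. nbhd E (S!j)) \<noteq> {}"
  proof (intro allI impI)
    fix i assume i: "i < length S"
    show "nbhd E (S!i) - {} - (\<Union>j<i. nbhd E (S!j)) \<noteq> {}"
    proof (cases "i = 0")
      case True
      have "S!i \<in> set S" using i by (rule nth_mem)
      then have "S!i \<in> V" using sub by blast
      then show ?thesis using True assms(2) by simp
    next
      case False
      then show ?thesis using i cond by simp
    qed
  qed
  then show "set S \<subseteq> V \<and> lgN (nbhd E) {} S" using sub lgN_index by blast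
next
  assume a: "set S \<subseteq> V \<and> lgN (nbhd E) {} S"
  then have "\<forall>i<length S. nbhd E (S!i) - {} - (\<Union>j<i. nbhd E (S!j)) \<noteq> {}"
    using lgN_index by blast
  then have "\<forall>i. 1 \<le> i \<and> i < length S \<longrightarrow> nbhd E (S ! i) - (\<Union>j<i. nbhd E (S ! j)) \<noteq> {}"
    by simp
  then show "legal_sequence V E S" unfolding legal_sequence_def
    using lgN_distinct[of "nbhd E" "{}" S] a by blast
qed

lemma extend_tds:
  assumes "graph V E" "\<forall>v\<in>V. nbhd E v \<noteq> {}" "set S \<subseteq> V" "lgN (nbhd E) {} S"
  shows "\<exists>S2. total_dominating_sequence V E S2 \<and> length S \<le> length S2"
  using assms(3,4)
proof (induction "card V - length S" arbitrary: S rule: less_induct)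
  case less
  have fin: "finite V" using assms(1) graph_def by auto
  have dS: "distinct S" using lgN_distinct less.prems by blast
  have lenS: "length S \<le> card V" using dS less.prems(1) fin
    by (metis card_mono distinct_card)
  show ?case
  proof (cases "\<forall>v\<in>V. \<exists>d\<in>set S. d \<in> nbhd E v")
    case True
    then have "total_dominating_sequence V E S"
      unfolding total_dominating_sequence_def total_dominating_set_def
      using legal_iff[OF assms(1,2)] less.prems by auto
    then show ?thesis by blast
  next
    case False
    then obtain v where v: "v \<in> V" "\<forall>d\<in>set S. d \<notin> nbhd E v" by blast
    obtain d where d: "d \<in> nbhd E v" using assms(2) v by blast
    have dV: "d \<in> V" using d nbhd_sub[OF assms(1)] by auto
    have dnS: "d \<notin> set S" using d v by blast
    have vd: "v \<in> nbhd E d" using d by (simp add: nbhd_def insert_commute)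
    have "v \<notin> \<Union>(nbhd E ` set S)"
    proof
      assume "v \<in> \<Union>(nbhd E ` set S)"
      then obtain d' where "d' \<in> set S" "v \<in> nbhd E d'" by auto
      then have "d' \<in> nbhd E v" by (simp add: nbhd_def insert_commute)
      then show False using v \<open>d' \<in> set S\<close> by blast
    qed
    then have "lgN (nbhd E) {} (S @ [d])"
      unfolding lgN_append using less.prems vd by auto
    moreover have "set (S @ [d]) \<subseteq> V" using dV less.prems by auto
    moreover have "length (S @ [d]) \<le> card V"
      using calculation lgN_distinct fin by (metis card_mono distinct_card)
    moreover have "card V - length (S@[d]) < card V - length S" using calculation(3) by simp
    ultimately have "\<exists>S2. total_dominating_sequence V E S2 \<and> length (S @ [d]) \<le> length S2"
      using less.hyps by blast
    then show ?thesis by auto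
  qed
qed



definition NW :: "'a set set \<Rightarrow> 'a set \<Rightarrow> 'a \<Rightarrow> 'a set" where
  "NW E W v = nbhd E v \<inter> W"
definition EW :: "'a set set \<Rightarrow> 'a set \<Rightarrow> 'a set set" where
  "EW E W = {e\<in>E. e \<subseteq> W}"
definition acyc :: "'a set \<Rightarrow> 'a set set \<Rightarrow> bool" where
  "acyc V E \<longleftrightarrow> (\<forall>W\<subseteq>V. W \<noteq> {} \<longrightarrow> card (EW E W) < card W)"

lemma graph_finite_E: "graph V E \<Longrightarrow> finite E"
  unfolding graph_def by (meson Pow_iff finite_Pow_iff rev_finite_subset subsetI)

lemma edge_card2: "graph V E \<Longrightarrow> e \<in> E \<Longrightarrow> \<exists>a b. e = {a,b} \<and> a \<noteq> b"
  unfolding graph_def using card_2_iff by metis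

lemma in_nbhd_iff: "u \<in> nbhd E v \<longleftrightarrow> {u,v} \<in> E"
  by (simp add: nbhd_def)

lemma handshake:
  assumes g: "graph V E" and W: "W \<subseteq> V"
  shows "(\<Sum>v\<in>W. card (NW E W v)) = 2 * card (EW E W)"
proof -
  have finW: "finite W" using g W unfolding graph_def by (auto intro: finite_subset)
  have finE: "finite (EW E W)" using graph_finite_E[OF g] unfolding EW_def by auto
  have c1: "card (NW E W v) = card {e\<in>EW E W. v \<in> e}" if v: "v \<in> W" for v
  proof -
    have "bij_betw (\<lambda>u. {u,v}) (NW E W v) {e\<in>EW E W. v \<in> e}"
    proof (rule bij_betwI')
      fix a b assume "a \<in> NW E W v" "b \<in> NW E W v"
      then show "({a, v} = {b, v}) = (a = b)" by (auto simp: doubleton_eq_iff)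
    next
      fix a assume "a \<in> NW E W v"
      then show "{a, v} \<in> {e \<in> EW E W. v \<in> e}" using v by (auto simp: NW_def EW_def nbhd_def)
    next
      fix e assume e: "e \<in> {e \<in> EW E W. v \<in> e}"
      then obtain a b where ab: "e = {a,b}" "a \<noteq> b" using edge_card2[OF g] unfolding EW_def by blast
      show "\<exists>u\<in>NW E W v. e = {u, v}"
      proof (cases "v = a")
        case True
        then show ?thesis using e ab by (intro bexI[of _ b]) (auto simp: NW_def EW_def nbhd_def insert_commute)
      next
        case False
        then have "v = b" using e ab by auto
        then show ?thesis using e ab by (intro bexI[of _ a]) (auto simp: NW_def EW_def nbhd_def)
      qed
    qed
    then show ?thesis by (rule bij_betw_same_card)
  qed
  have "(\<Sum>v\<in>W. card (NW E W v)) = (\<Sum>v\<in>W. card {e\<in>EW E W. v \<in> e})"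
    using c1 by (rule sum.cong[OF refl])
  also have "\<dots> = (\<Sum>v\<in>W. \<Sum>e\<in>EW E W. if v \<in> e then 1 else 0)"
    using finE by (simp add: sum.inter_filter[symmetric])
  also have "\<dots> = (\<Sum>e\<in>EW E W. \<Sum>v\<in>W. if v \<in> e then 1 else 0)"
    by (rule sum.swap)
  also have "\<dots> = (\<Sum>e\<in>EW E W. card {v\<in>W. v \<in> e})"
    using finW by (simp add: sum.inter_filter[symmetric])
  also have "\<dots> = (\<Sum>e\<in>EW E W. 2)"
  proof (rule sum.cong[OF refl])
    fix e assume "e \<in> EW E W"
    then have "{v\<in>W. v \<in> e} = e" "card e = 2" using g unfolding EW_def graph_def by auto
    then show "card {v\<in>W. v \<in> e} = 2" by simp
  qed
  also have "\<dots> = 2 * card (EW E W)" by simp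
  finally show ?thesis .
qed

lemma conn_remove_leaf:
  assumes "nbhd E x = {y}" "(adj E)\<^sup>*\<^sup>* u w" "u \<noteq> x" "x \<noteq> y"
  shows "(w \<noteq> x \<longrightarrow> (adj {e\<in>E. x \<notin> e})\<^sup>*\<^sup>* u w) \<and> (w = x \<longrightarrow> (adj {e\<in>E. x \<notin> e})\<^sup>*\<^sup>* u y)"
  using assms(2)
proof (induction rule: rtranclp_induct)
  case base
  then show ?case using assms(3) by simp
next
  case (step w z)
  have wz: "{w,z} \<in> E" using step.hyps(2) by (simp add: adj_def)
  show ?case
  proof (cases "z = x")
    case True
    then have "w \<in> nbhd E x" using wz by (simp add: nbhd_def)
    then have "w = y" using assms(1) by simp
    moreover have "y \<noteq> x" using assms(4) by simp
    ultimately show ?thesis using step.IH True by auto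
  next
    case False
    show ?thesis
    proof (cases "w = x")
      case True
      then have "z \<in> nbhd E x" using wz by (simp add: nbhd_def insert_commute)
      then have "z = y" using assms(1) by simp
      then show ?thesis using step.IH True False by auto
    next
      case wF: False
      then have "adj {e\<in>E. x \<notin> e} w z" using wz False by (simp add: adj_def)
      then show ?thesis using step.IH wF False by (meson rtranclp.rtrancl_into_rtrancl)
    qed
  qed
qed

lemma tree_acyc:
  assumes "graph V E" "connected_graph V E" "V \<noteq> {}" "card E + 1 = card V"
  shows "acyc V E"
  using assms
proof (induction "card V" arbitrary: V E rule: less_induct)
  case less
  have g: "graph V E" by fact
  have finV: "finite V" using g graph_def by auto
  have finE: "finite E" using graph_finite_E[OF g] .
  show ?case
  proof (cases "card V = 1")
    case True
    then have "E = {}" using less.prems(4) finE by simp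
    then show ?thesis unfolding acyc_def EW_def using finV
      by (auto simp: card_gt_0_iff intro: finite_subset)
  next
    case False
    have "card V \<noteq> 0" using less.prems(3) finV by simp
    then have c2: "card V \<ge> 2" using False by linarith
    have noiso: "nbhd E v \<noteq> {}" if v: "v \<in> V" for v
    proof -
      have "card (V - {v}) \<noteq> 0" using c2 v finV by (simp add: card_Diff_singleton)
      then obtain u where u: "u \<in> V" "u \<noteq> v" by (metis Diff_iff card.empty equals0I singletonI)
      have "(adj E)\<^sup>*\<^sup>* v u" using less.prems(2) u v unfolding connected_graph_def by auto
      then obtain w where "adj E v w" using u(2)
        by (metis converse_rtranclpE)
      then have "w \<in> nbhd E v" by (simp add: adj_def nbhd_def insert_commute)
      then show ?thesis by auto
    qed
    have NWV: "NW E V v = nbhd E v" for v using nbhd_sub[OF g] by (auto simp: NW_def)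
    have EWV: "EW E V = E" using g unfolding EW_def graph_def by auto
    have hs: "(\<Sum>v\<in>V. card (nbhd E v)) = 2 * card E"
      using handshake[OF g order_refl] NWV EWV by simp
    have "\<exists>x\<in>V. card (nbhd E x) = 1"
    proof (rule ccontr)
      assume "\<not> ?thesis"
      then have "\<forall>v\<in>V. card (nbhd E v) \<noteq> 1" by blast
      have "\<forall>v\<in>V. card (nbhd E v) \<noteq> 0" using noiso graph_finite_nbhd[OF g] by simp
      then have "\<forall>v\<in>V. 2 \<le> card (nbhd E v)" using \<open>\<forall>v\<in>V. card (nbhd E v) \<noteq> 1\<close>
        by (metis One_nat_def Suc_1 Suc_leI le_neq_implies_less less_one not_le)
      then have "(\<Sum>v\<in>V. 2) \<le> (\<Sum>v\<in>V. card (nbhd E v))" by (intro sum_mono) auto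
      then show False using hs less.prems(4) c2 by simp
    qed
    then obtain x where x: "x \<in> V" "card (nbhd E x) = 1" by blast
    obtain y where y: "nbhd E x = {y}" using x(2) card_1_singletonE by blast
    have xy: "x \<noteq> y" using nbhd_irrefl[OF g, of x] y by auto
    have yV: "y \<in> V" using nbhd_sub[OF g] y by auto
    define V' where "V' = V - {x}"
    define E' where "E' = {e\<in>E. x \<notin> e}"
    have E'eq: "E' = EW E V'" using g unfolding E'_def EW_def V'_def graph_def by auto
    have "y \<in> nbhd E x" using y by simp
    then have "{y,x} \<in> E" by (simp add: nbhd_def)
    then have xyE: "{x,y} \<in> E" by (simp add: insert_commute)
    have Eeq: "E = insert {x,y} E'"
    proof
      show "E \<subseteq> insert {x, y} E'"
      proof
        fix e assume e: "e \<in> E"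
        show "e \<in> insert {x, y} E'"
        proof (cases "x \<in> e")
          case True
          obtain a b where ab: "e = {a,b}" "a \<noteq> b" using edge_card2[OF g e] by blast
          show ?thesis
          proof (cases "x = a")
            case True
            then have "b \<in> nbhd E x" using e ab by (simp add: nbhd_def insert_commute)
            then show ?thesis using y ab True by auto
          next
            case False
            then have "x = b" using ab \<open>x \<in> e\<close> by auto
            then have "a \<in> nbhd E x" using e ab by (simp add: nbhd_def)
            then show ?thesis using y ab \<open>x = b\<close> by (auto simp: insert_commute)
          qed
        next
          case False
          then show ?thesis using e E'_def by auto
        qed
      qed
    next
      show "insert {x, y} E' \<subseteq> E" using xyE E'_def by auto
    qed
    have xyE': "{x,y} \<notin> E'" using E'_def by auto
    have finE': "finite E'" using finE E'_def by simp
    have "card (insert {x,y} E') = card E' + 1" using xyE' finE' by simp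
    then have cE: "card E = card E' + 1" using Eeq by simp
    have cV: "card V = card V' + 1" using card_Suc_Diff1[OF finV x(1)] V'_def by simp
    have g': "graph V' E'" using g unfolding graph_def E'eq EW_def V'_def by auto
    have conn': "connected_graph V' E'"
      unfolding connected_graph_def
    proof (intro ballI)
      fix u w assume u: "u \<in> V'" and w: "w \<in> V'"
      have "(adj E)\<^sup>*\<^sup>* u w" using less.prems(2) u w V'_def unfolding connected_graph_def by auto
      then show "(adj E')\<^sup>*\<^sup>* u w" using conn_remove_leaf[OF y _ _ xy, of u w] u w V'_def E'_def by auto
    qed
    have ne': "V' \<noteq> {}" using yV xy V'_def by auto
    have ac': "acyc V' E'"
      using less.hyps[of V' E'] g' conn' ne' cE cV less.prems(4) by simp
    show ?thesis unfolding acyc_def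
    proof (intro allI impI)
      fix W assume W: "W \<subseteq> V" and Wne: "W \<noteq> {}"
      have finW: "finite W" using W finV by (auto intro: finite_subset)
      show "card (EW E W) < card W"
      proof (cases "x \<in> W")
        case False
        then have "EW E W = EW E' W" unfolding EW_def E'_def by auto
        moreover have "W \<subseteq> V'" using W False V'_def by auto
        ultimately show ?thesis using ac' Wne unfolding acyc_def by auto
      next
        case True
        show ?thesis
        proof (cases "W = {x}")
          case True
          have "EW E W = {}"
          proof (rule ccontr)
            assume "EW E W \<noteq> {}"
            then obtain e where e: "e \<in> E" "e \<subseteq> {x}" unfolding EW_def True by auto
            then have "card e \<le> card {x}" by (intro card_mono) auto
            then show False using g e unfolding graph_def by auto
          qed
          then show ?thesis using True by simp
        next
          case False
          have sub: "EW E W \<subseteq> insert {x,y} (EW E' (W - {x}))"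
            using Eeq unfolding EW_def E'_def by auto
          have "W - {x} \<subseteq> V'" "W - {x} \<noteq> {}" using W False True V'_def by auto
          then have lt: "card (EW E' (W - {x})) < card (W - {x})" using ac' unfolding acyc_def by auto
          have fin2: "finite (EW E' (W - {x}))" using finE unfolding EW_def E'_def by auto
          have "card (EW E W) \<le> card (insert {x,y} (EW E' (W - {x})))"
            using sub fin2 by (intro card_mono) auto
          also have "\<dots> \<le> card (EW E' (W - {x})) + 1" using fin2 by (simp add: card_insert_if)
          also have "\<dots> < card (W - {x}) + 1" using lt by simp
          also have "\<dots> = card W" using card_Suc_Diff1[OF finW True] by simp
          finally show ?thesis .
        qed
      qed
    qed
  qed
qed



definition LW :: "'a set set \<Rightarrow> 'a set \<Rightarrow> 'a set" where
  "LW E W = {v\<in>W. card (NW E W v) = 1}"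
definition SW :: "'a set set \<Rightarrow> 'a set \<Rightarrow> 'a set" where
  "SW E W = {v\<in>W. \<exists>u\<in>NW E W v. u \<in> LW E W}"

lemma NW_sub: "NW E W v \<subseteq> W" by (auto simp: NW_def)
lemma NW_sym: "u \<in> NW E W v \<Longrightarrow> v \<in> W \<Longrightarrow> v \<in> NW E W u"
  by (auto simp: NW_def nbhd_def insert_commute)
lemma NW_irr: "graph V E \<Longrightarrow> v \<notin> NW E W v"
  using nbhd_irrefl[of V E v] by (auto simp: NW_def)
lemma NW_diff: "NW E (W - X) v = NW E W v - X" by (auto simp: NW_def)
lemma NW_fin: "finite W \<Longrightarrow> finite (NW E W v)" by (auto simp: NW_def)
lemma NW_single: "NW E W x = {y} \<Longrightarrow> x \<in> NW E W v \<Longrightarrow> v \<in> W \<Longrightarrow> v = y"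
  using NW_sym by fastforce
lemma NW_mono: "W' \<subseteq> W \<Longrightarrow> NW E W' v = NW E W v \<inter> W'" by (auto simp: NW_def)

lemma LW_sub: "LW E W \<subseteq> W" by (auto simp: LW_def)
lemma SW_sub: "SW E W \<subseteq> W" by (auto simp: SW_def)

lemma card_ge2_obtain: "finite A \<Longrightarrow> 2 \<le> card A \<Longrightarrow> x \<in> A \<Longrightarrow> \<exists>y\<in>A. y \<noteq> x"
  by (metis card_le_Suc0_iff_eq not_less_eq_eq numeral_2_eq_2)

lemma card_ne01: "finite A \<Longrightarrow> A \<noteq> {} \<Longrightarrow> card A \<noteq> 1 \<Longrightarrow> 2 \<le> card A"
  by (metis One_nat_def Suc_1 Suc_leI card_gt_0_iff le_neq_implies_less)

lemma good_leaf:
  assumes g: "graph V E" and ac: "acyc V E" and W: "W \<subseteq> V" "W \<noteq> {}"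
    and ni: "\<forall>v\<in>W. NW E W v \<noteq> {}"
  shows "\<exists>x y. x \<in> W \<and> NW E W x = {y} \<and>
     (2 \<le> card {u\<in>NW E W y. u \<in> LW E W} \<or> card (NW E W y) \<le> 2)"
proof -
  have finW: "finite W" using g W unfolding graph_def by (auto intro: finite_subset)
  define I where "I = W - LW E W"
  show ?thesis
  proof (cases "I = {}")
    case True
    obtain x where x: "x \<in> W" using W by auto
    then have "x \<in> LW E W" using True I_def by auto
    then have "card (NW E W x) = 1" by (simp add: LW_def)
    then obtain y where y: "NW E W x = {y}" using card_1_singletonE by blast
    have "y \<in> W" using y NW_sub by fastforce
    then have "y \<in> LW E W" using True I_def by auto
    then have "card (NW E W y) \<le> 2" by (simp add: LW_def)
    then show ?thesis using x y by blast
  next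
    case False
    have IV: "I \<subseteq> V" using I_def W by auto
    have finI: "finite I" using finW I_def by auto
    have lt: "card (EW E I) < card I" using ac IV False unfolding acyc_def by auto
    have hs: "(\<Sum>v\<in>I. card (NW E I v)) = 2 * card (EW E I)" using handshake[OF g IV] .
    have "\<exists>y\<in>I. card (NW E I y) \<le> 1"
    proof (rule ccontr)
      assume "\<not> ?thesis"
      then have "\<forall>v\<in>I. 2 \<le> card (NW E I v)" by auto
      then have "(\<Sum>v\<in>I. 2) \<le> (\<Sum>v\<in>I. card (NW E I v))" by (intro sum_mono) auto
      then show False using hs lt by simp
    qed
    then obtain y where yI: "y \<in> I" and cy: "card (NW E I y) \<le> 1" by blast
    have yW: "y \<in> W" and yL: "y \<notin> LW E W" using yI I_def by auto
    have finN: "finite (NW E W y)" by (rule NW_fin[OF finW])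
    have ne: "NW E W y \<noteq> {}" using ni yW by blast
    have n1: "card (NW E W y) \<noteq> 1" using yL yW by (simp add: LW_def)
    have c2: "2 \<le> card (NW E W y)" using card_ne01[OF finN ne n1] .
    define A where "A = {u\<in>NW E W y. u \<in> LW E W}"
    have "I \<subseteq> W" using I_def by blast
    then have NI: "NW E I y = NW E W y \<inter> I" by (rule NW_mono)
    have A': "A = NW E W y \<inter> LW E W" using A_def by blast
    have "NW E W y \<subseteq> I \<union> LW E W" using NW_sub[of E W y] unfolding I_def by blast
    then have split: "NW E W y = NW E I y \<union> A"
      unfolding NI A' by blast
    have "card (NW E W y) \<le> card (NW E I y) + card A"
      unfolding split by (rule card_Un_le)
    then have cA: "1 \<le> card A" using cy c2 by linarith
    then have "A \<noteq> {}" by auto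
    then obtain x where xA: "x \<in> A" by blast
    have xW: "x \<in> W" and xL: "card (NW E W x) = 1" and xy: "x \<in> NW E W y"
      using xA unfolding A_def LW_def by auto
    have "y \<in> NW E W x" using NW_sym[OF xy yW] .
    then have xs: "NW E W x = {y}" using xL card_1_singletonE by (metis singletonD)
    show ?thesis
    proof (cases "2 \<le> card A")
      case True
      then show ?thesis using xW xs A_def by blast
    next
      case False
      then have "card (NW E W y) \<le> 2" using \<open>card (NW E W y) \<le> card (NW E I y) + card A\<close> cy by linarith
      then show ?thesis using xW xs by blast
    qed
  qed
qed



lemma card_le_diff_plus: "finite A \<Longrightarrow> finite B \<Longrightarrow> card A \<le> card (A - B) + card B"
proof -
  assume "finite A" "finite B"
  then have "card A \<le> card ((A - B) \<union> B)" by (intro card_mono) auto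
  also have "\<dots> \<le> card (A - B) + card B" by (rule card_Un_le)
  finally show ?thesis .
qed

lemma card_diff_sub: "finite A \<Longrightarrow> B \<subseteq> A \<Longrightarrow> card (A - B) + card B = card A"
  by (metis card_Diff_subset card_mono finite_subset le_add_diff_inverse2)

lemma card_two: "x \<noteq> y \<Longrightarrow> card {x,y} = 2" by simp

lemma forest_lb:
  assumes g: "graph V E" and ac: "acyc V E"
  shows "W \<subseteq> V \<Longrightarrow> W \<noteq> {} \<Longrightarrow> \<forall>v\<in>W. NW E W v \<noteq> {} \<Longrightarrow>
    \<exists>S. lgN (NW E W) {} S \<and> set S \<subseteq> W \<and>
      2 * (int (card W) + 1 - int (card (LW E W)) + int (card (SW E W))) \<le> 3 * int (length S)"
proof (induction "card W" arbitrary: W rule: less_induct)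
  case less
  have W: "W \<subseteq> V" "W \<noteq> {}" and ni: "\<forall>v\<in>W. NW E W v \<noteq> {}" using less.prems by auto
  have finW: "finite W" using g W unfolding graph_def by (auto intro: finite_subset)
  have finN: "\<And>v. finite (NW E W v)" using NW_fin[OF finW] .
  have finL: "finite (LW E W)" by (rule finite_subset[OF LW_sub finW])
  have finS: "finite (SW E W)" by (rule finite_subset[OF SW_sub finW])
  obtain x y where xW: "x \<in> W" and xs: "NW E W x = {y}"
    and cas: "2 \<le> card {u\<in>NW E W y. u \<in> LW E W} \<or> card (NW E W y) \<le> 2"
    using good_leaf[OF g ac W ni] by blast
  have yW: "y \<in> W" using xs NW_sub[of E W x] by blast
  have xy: "x \<noteq> y" using xs NW_irr[OF g, of x W] by auto
  have xL: "x \<in> LW E W" using xW xs by (simp add: LW_def)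
  have yx: "x \<in> NW E W y" using NW_sym[of y E W x] xs xW by auto
  have xonly: "\<And>v. v \<in> W \<Longrightarrow> x \<in> NW E W v \<Longrightarrow> v = y" using NW_single[OF xs] by blast
  have ySW: "y \<in> SW E W" using yW yx xL by (auto simp: SW_def)
  show ?case
  proof (cases "2 \<le> card {u\<in>NW E W y. u \<in> LW E W}")
    case True
    have finA: "finite {u\<in>NW E W y. u \<in> LW E W}" using finN by simp
    obtain x2 where x2: "x2 \<in> NW E W y" "x2 \<in> LW E W" "x2 \<noteq> x"
      using card_ge2_obtain[OF finA True, of x] yx xL by auto
    have x2W: "x2 \<in> W" using x2(2) LW_sub[of E W] by blast
    have yx2: "y \<in> NW E W x2" using NW_sym[OF x2(1) yW] .
    have "card (NW E W x2) = 1" using x2(2) unfolding LW_def by simp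
    then obtain z where "NW E W x2 = {z}" by (rule card_1_singletonE)
    then have x2s: "NW E W x2 = {y}" using yx2 by simp
    have "card {x, x2} \<le> card (NW E W y)" using yx x2(1) finN by (intro card_mono) auto
    then have yL: "y \<notin> LW E W" using x2(3) by (auto simp: LW_def)
    define W' where "W' = W - {x}"
    have W'V: "W' \<subseteq> V" using W W'_def by auto
    have yW': "y \<in> W'" using yW xy W'_def by auto
    have W'ne: "W' \<noteq> {}" using yW' by auto
    have cW: "card W = card W' + 1" using card_Suc_Diff1[OF finW xW] W'_def by simp
    have NW': "\<And>v. NW E W' v = NW E W v - {x}" by (simp add: W'_def NW_diff)
    have NW'eq: "\<And>v. v \<in> W \<Longrightarrow> v \<noteq> y \<Longrightarrow> NW E W' v = NW E W v" using xonly NW' by blast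
    have ni': "\<forall>v\<in>W'. NW E W' v \<noteq> {}"
    proof
      fix v assume v: "v \<in> W'"
      show "NW E W' v \<noteq> {}"
      proof (cases "v = y")
        case True
        then show ?thesis using x2 NW' by auto
      next
        case False
        then show ?thesis using NW'eq[of v] v W'_def ni by auto
      qed
    qed
    obtain S' where S': "lgN (NW E W') {} S'" "set S' \<subseteq> W'"
      and bd': "2 * (int (card W') + 1 - int (card (LW E W')) + int (card (SW E W'))) \<le> 3 * int (length S')"
      using less.hyps[of W'] cW W'V W'ne ni' by fastforce
    have lg: "lgN (NW E W) {} S'"
      by (rule lgN_mono[OF S'(1), where X = "{x}"]) (auto simp: NW')
    have x2L': "x2 \<in> LW E W'"
    proof -
      have "NW E W' x2 = {y}" using x2s NW' xy by auto
      then show ?thesis using x2W x2(3) W'_def by (simp add: LW_def)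
    qed
    have xS: "x \<notin> SW E W" using xs yL by (auto simp: SW_def)
    have SWsub: "SW E W \<subseteq> SW E W'"
    proof
      fix s assume s: "s \<in> SW E W"
      then obtain u where u: "u \<in> NW E W s" "u \<in> LW E W" and sW: "s \<in> W" by (auto simp: SW_def)
      have sx: "s \<noteq> x" using s xS by auto
      show "s \<in> SW E W'"
      proof (cases "u = x")
        case True
        then have "s = y" using NW_single[OF xs] u(1) sW by auto
        then show ?thesis using x2L' x2 NW' yW' by (auto simp: SW_def)
      next
        case False
        have uW: "u \<in> W" using u(2) LW_sub[of E W] by blast
        have "u \<noteq> y" using u yL by auto
        then have "NW E W' u = NW E W u" using NW'eq uW by auto
        then have "u \<in> LW E W'" using u(2) uW False W'_def by (simp add: LW_def)
        then show ?thesis using u False sx sW W'_def NW' by (auto simp: SW_def)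
      qed
    qed
    have LWsub: "LW E W' \<subseteq> insert y (LW E W - {x})"
    proof
      fix v assume v: "v \<in> LW E W'"
      show "v \<in> insert y (LW E W - {x})"
      proof (cases "v = y")
        case False
        have vW: "v \<in> W" "v \<noteq> x" using v LW_sub[of E W'] W'_def by auto
        then have "NW E W' v = NW E W v" using NW'eq False by auto
        then show ?thesis using v vW by (auto simp: LW_def)
      qed simp
    qed
    have finW': "finite W'" using finW W'_def by simp
    have finL': "finite (LW E W')" "finite (SW E W')"
      by (rule finite_subset[OF LW_sub finW'], rule finite_subset[OF SW_sub finW'])
    have key: "int (card (LW E W')) - int (card (SW E W')) \<le> int (card (LW E W)) - int (card (SW E W)) - 1"
    proof (cases "y \<in> LW E W'")
      case True
      have x2S': "x2 \<in> SW E W'" using True yx2 NW' xy x2W x2(3) W'_def by (auto simp: SW_def)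
      have x2S: "x2 \<notin> SW E W" using x2s yL by (auto simp: SW_def)
      have "card (insert x2 (SW E W)) \<le> card (SW E W')" using x2S' SWsub finL' by (intro card_mono) auto
      then have s1: "card (SW E W) + 1 \<le> card (SW E W')" using x2S finS by simp
      have "card (LW E W') \<le> card (insert y (LW E W - {x}))" using LWsub finL by (intro card_mono) auto
      also have "\<dots> \<le> card (LW E W - {x}) + 1" using finL by (simp add: card_insert_if)
      also have "\<dots> = card (LW E W)" using card_Suc_Diff1[OF finL xL] by simp
      finally show ?thesis using s1 by linarith
    next
      case False
      then have "LW E W' \<subseteq> LW E W - {x}" using LWsub by auto
      then have "card (LW E W') \<le> card (LW E W - {x})" using finL by (intro card_mono) auto
      then have "card (LW E W') + 1 \<le> card (LW E W)" using card_Suc_Diff1[OF finL xL] by simp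
      moreover have "card (SW E W) \<le> card (SW E W')" using SWsub finL' by (intro card_mono) auto
      ultimately show ?thesis by linarith
    qed
    have "2 * (int (card W) + 1 - int (card (LW E W)) + int (card (SW E W))) \<le> 3 * int (length S')"
    proof -
      have "int (card W) = int (card W') + 1" using cW by simp
      then show ?thesis using bd' key by (smt (verit))
    qed
    then show ?thesis using lg S'(2) W'_def by blast
  next
    case False
    then have c2: "card (NW E W y) \<le> 2" using cas by simp
    have finA: "finite {u\<in>NW E W y. u \<in> LW E W}" using finN by simp
    have onlyleaf: "u = x" if u: "u \<in> NW E W y" "u \<in> LW E W" for u
    proof (rule ccontr)
      assume "u \<noteq> x"
      then have "card {x, u} \<le> card {u\<in>NW E W y. u \<in> LW E W}"
        using u yx xL finA by (intro card_mono) auto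
      then show False using False \<open>u \<noteq> x\<close> by auto
    qed
    define W' where "W' = W - {x,y}"
    have W'V: "W' \<subseteq> V" using W W'_def by auto
    have NW': "\<And>v. NW E W' v = NW E W v - {x,y}" by (simp add: W'_def NW_diff)
    have cW: "card W = card W' + 2"
    proof -
      have "card W' + card {x,y} = card W" unfolding W'_def using finW xW yW by (intro card_diff_sub) auto
      then show ?thesis using xy by simp
    qed
    have xnot: "\<And>v. v \<in> W \<Longrightarrow> v \<noteq> y \<Longrightarrow> x \<notin> NW E W v" using xonly by blast
    show ?thesis
    proof (cases "W' = {}")
      case True
      then have Wxy: "W = {x,y}" using xW yW W'_def by auto
      have NWy: "NW E W y = {x}" using yx NW_sub[of E W y] NW_irr[OF g, of y W] Wxy by auto
      have LWW: "LW E W = W" using xs NWy Wxy by (auto simp: LW_def)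
      have "card (SW E W) \<le> card W" using SW_sub[of E W] finW by (intro card_mono) auto
      moreover have "card W = 2" using Wxy xy by simp
      moreover have "lgN (NW E W) {} [x,y]" using xs NWy xy by auto
      moreover have "set [x,y] \<subseteq> W" using Wxy by auto
      ultimately show ?thesis using LWW
        by (intro exI[of _ "[x,y]"]) auto
    next
      case W'ne: False
      have ni': "\<forall>v\<in>W'. NW E W' v \<noteq> {}"
      proof
        fix v assume v: "v \<in> W'"
        have vW: "v \<in> W" "v \<noteq> x" "v \<noteq> y" using v W'_def by auto
        have xn: "x \<notin> NW E W v" using xnot vW by auto
        show "NW E W' v \<noteq> {}"
        proof (cases "y \<in> NW E W v")
          case True
          have "v \<in> NW E W y" using NW_sym[OF True vW(1)] .
          then have "v \<notin> LW E W" using onlyleaf vW by auto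
          then have "card (NW E W v) \<noteq> 1" using vW by (simp add: LW_def)
          then have "2 \<le> card (NW E W v)" using card_ne01[OF finN] ni vW by auto
          then obtain w where "w \<in> NW E W v" "w \<noteq> y" using card_ge2_obtain[OF finN _ True] by blast
          then show ?thesis using xn NW' by auto
        next
          case False
          then show ?thesis using xn NW' ni vW by auto
        qed
      qed
      obtain S' where S': "lgN (NW E W') {} S'" "set S' \<subseteq> W'"
        and bd': "2 * (int (card W') + 1 - int (card (LW E W')) + int (card (SW E W'))) \<le> 3 * int (length S')"
        using less.hyps[of W'] cW W'V W'ne ni' by fastforce
      define S where "S = x # S' @ [y]"
      have lg1: "lgN (NW E W) {y} S'"
        by (rule lgN_mono[OF S'(1), where X = "{x,y}"]) (auto simp: NW')
      have lg2: "x \<in> NW E W y - ({y} \<union> \<Union>(NW E W ` set S'))"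
        using yx xy xnot S'(2) W'_def by auto
      have lg: "lgN (NW E W) {} S"
        unfolding S_def using lg1 lg2 xs by (auto simp: lgN_append)
      have setS: "set S \<subseteq> W" using S'(2) xW yW W'_def S_def by auto
      have lenS: "length S = length S' + 2" using S_def by simp
      define Z where "Z = NW E W y - {x}"
      have finZ: "finite Z" using finN Z_def by simp
      have LWsub: "LW E W' \<subseteq> (LW E W - {x,y}) \<union> Z"
      proof
        fix v assume v: "v \<in> LW E W'"
        have vW: "v \<in> W" "v \<noteq> x" "v \<noteq> y" using v LW_sub[of E W'] W'_def by auto
        show "v \<in> (LW E W - {x,y}) \<union> Z"
        proof (cases "y \<in> NW E W v")
          case True
          then show ?thesis using NW_sym[OF True vW(1)] vW Z_def by auto
        next
          case False
          then have "NW E W' v = NW E W v" using xnot vW NW' by auto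
          then show ?thesis using v vW by (auto simp: LW_def)
        qed
      qed
      have SWsub: "SW E W - {x,y} \<subseteq> SW E W'"
      proof
        fix s assume s: "s \<in> SW E W - {x,y}"
        then obtain u where u: "u \<in> NW E W s" "u \<in> LW E W" and sW: "s \<in> W" "s \<noteq> x" "s \<noteq> y"
          by (auto simp: SW_def)
        have uW: "u \<in> W" using u(2) LW_sub[of E W] by blast
        have ux: "u \<noteq> x" using u(1) sW xonly by auto
        have uy: "u \<noteq> y"
        proof
          assume "u = y"
          then have "card (NW E W y) = 1" using u by (simp add: LW_def)
          then obtain z where "NW E W y = {z}" by (rule card_1_singletonE)
          then have "NW E W y = {x}" using yx by simp
          then show False using NW_sym[OF u(1) sW(1)] \<open>u = y\<close> sW by auto
        qed
        have "y \<notin> NW E W u"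
        proof
          assume "y \<in> NW E W u"
          then have "u \<in> NW E W y" using NW_sym[of y E W u] uW by blast
          then show False using onlyleaf u ux by auto
        qed
        then have "NW E W' u = NW E W u" using xnot uW uy NW' by auto
        then have "u \<in> LW E W'" using u uW ux uy W'_def by (simp add: LW_def)
        then show "s \<in> SW E W'" using u ux uy sW W'_def NW' by (auto simp: SW_def)
      qed
      have finW': "finite W'" using finW W'_def by simp
      have finL': "finite (LW E W')" "finite (SW E W')"
        by (rule finite_subset[OF LW_sub finW'], rule finite_subset[OF SW_sub finW'])
      have key: "int (card (LW E W')) - int (card (SW E W')) \<le> int (card (LW E W)) - int (card (SW E W)) + 1"
      proof (cases "y \<in> LW E W")
        case True
        have "card (NW E W y) = 1" using True by (simp add: LW_def)
        then obtain z where "NW E W y = {z}" by (rule card_1_singletonE)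
        then have "NW E W y = {x}" using yx by simp
        then have "Z = {}" using Z_def by auto
        then have "card (LW E W') \<le> card (LW E W - {x,y})" using LWsub finL by (intro card_mono) auto
        moreover have "card (LW E W - {x,y}) + 2 = card (LW E W)"
          using card_diff_sub[OF finL, of "{x,y}"] xL True xy by simp
        moreover have "card (SW E W) \<le> card (SW E W - {x,y}) + card {x,y}"
          using card_le_diff_plus[OF finS] by simp
        moreover have "card (SW E W - {x,y}) \<le> card (SW E W')" using SWsub finL' by (intro card_mono) auto
        ultimately show ?thesis using xy by simp
      next
        case False
        have xS: "x \<notin> SW E W" using xs False by (auto simp: SW_def)
        have "card {x} \<le> card (NW E W y)" using yx finN by (intro card_mono) auto
        then have cZ: "card Z \<le> 1" using c2 Z_def card_Diff_singleton[OF yx] by simp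
        have "card (LW E W') \<le> card ((LW E W - {x,y}) \<union> Z)" using LWsub finL finZ by (intro card_mono) auto
        also have "\<dots> \<le> card (LW E W - {x,y}) + card Z" by (rule card_Un_le)
        also have "LW E W - {x,y} = LW E W - {x}" using False by auto
        finally have l1: "card (LW E W') \<le> card (LW E W - {x}) + card Z" .
        have l2: "card (LW E W - {x}) + 1 = card (LW E W)" using card_Suc_Diff1[OF finL xL] by simp
        have "SW E W - {x,y} = SW E W - {y}" using xS by auto
        then have "card (SW E W - {y}) \<le> card (SW E W')" using SWsub finL' by (intro card_mono) auto
        moreover have "card (SW E W - {y}) + 1 = card (SW E W)" using card_Suc_Diff1[OF finS ySW] by simp
        ultimately show ?thesis using l1 l2 cZ by linarith
      qed
      have "2 * (int (card W) + 1 - int (card (LW E W)) + int (card (SW E W))) \<le> 3 * int (length S)"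
      proof -
        have "int (card W) = int (card W') + 2" "int (length S) = int (length S') + 2" using cW lenS by simp_all
        then show ?thesis using bd' key by (smt (verit))
      qed
      then show ?thesis using lg setS by blast
    qed
  qed
qed



lemma nbhd_EW: "nbhd (EW E W) v = (if v \<in> W then NW E W v else {})"
  by (auto simp: nbhd_def EW_def NW_def)

lemma edge_other: "graph V E \<Longrightarrow> e \<in> E \<Longrightarrow> a \<in> e \<Longrightarrow> \<exists>b. e = {a,b} \<and> b \<in> nbhd E a"
proof -
  assume g: "graph V E" and e: "e \<in> E" and a: "a \<in> e"
  obtain p q where pq: "e = {p,q}" "p \<noteq> q" using edge_card2[OF g e] by blast
  show ?thesis
  proof (cases "a = p")
    case True
    then show ?thesis using pq e by (intro exI[of _ q]) (auto simp: nbhd_def insert_commute)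
  next
    case False
    then have "a = q" using a pq by auto
    then show ?thesis using pq e by (intro exI[of _ p]) (auto simp: nbhd_def insert_commute)
  qed
qed

lemma leaf_supp_card:
  assumes finW: "finite W" and nss: "\<forall>v\<in>W. card {u\<in>NW E W v. u \<in> LW E W} < 2"
  shows "card (LW E W) \<le> card (SW E W)"
proof -
  define f where "f v = (SOME s. s \<in> NW E W v)" for v
  have fl: "NW E W v = {f v}" if v: "v \<in> LW E W" for v
  proof -
    have "card (NW E W v) = 1" using v by (simp add: LW_def)
    then obtain s where s: "NW E W v = {s}" by (rule card_1_singletonE)
    then have "f v = s" unfolding f_def by simp
    then show ?thesis using s by simp
  qed
  have img: "f ` LW E W \<subseteq> SW E W"
  proof
    fix s assume "s \<in> f ` LW E W"
    then obtain v where v: "v \<in> LW E W" "s = f v" by blast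
    have vW: "v \<in> W" using v(1) LW_sub[of E W] by blast
    have "s \<in> NW E W v" using fl[OF v(1)] v(2) by simp
    then have "v \<in> NW E W s" "s \<in> W" using NW_sym[of s E W v] vW NW_sub[of E W v] by auto
    then show "s \<in> SW E W" using v(1) by (auto simp: SW_def)
  qed
  have inj: "inj_on f (LW E W)"
  proof (rule inj_onI)
    fix a b assume a: "a \<in> LW E W" and b: "b \<in> LW E W" and ab: "f a = f b"
    have aW: "a \<in> W" and bW: "b \<in> W" using a b LW_sub[of E W] by auto
    have sW: "f a \<in> W" using fl[OF a] NW_sub[of E W a] by auto
    have "f a \<in> NW E W a" "f a \<in> NW E W b" using fl[OF a] fl[OF b] ab by auto
    then have "a \<in> NW E W (f a)" "b \<in> NW E W (f a)" using NW_sym aW bW by metis+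
    then have sub: "{a,b} \<subseteq> {u\<in>NW E W (f a). u \<in> LW E W}" using a b by auto
    have "finite {u\<in>NW E W (f a). u \<in> LW E W}" using NW_fin[OF finW] by simp
    then have "card {a,b} \<le> card {u\<in>NW E W (f a). u \<in> LW E W}" using sub by (rule card_mono)
    then have "card {a,b} < 2" using nss sW by (meson le_less_trans)
    then show "a = b" by (cases "a = b") auto
  qed
  have "finite (SW E W)" by (rule finite_subset[OF SW_sub finW])
  then show ?thesis using card_inj_on_le[OF inj img] by simp
qed

lemma eq_family:
  assumes g: "graph V E" and ac: "acyc V E"
  shows "W \<subseteq> V \<Longrightarrow> 2 \<le> card W \<Longrightarrow> \<forall>v\<in>W. NW E W v \<noteq> {} \<Longrightarrow>
     \<forall>v\<in>W. card {u\<in>NW E W v. u \<in> LW E W} < 2 \<Longrightarrow>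
     \<forall>S. lgN (NW E W) {} S \<longrightarrow> set S \<subseteq> W \<longrightarrow> 3 * length S \<le> 2 * (card W + 1) \<Longrightarrow>
     in_family_T W (EW E W)"
proof (induction "card W" arbitrary: W rule: less_induct)
  case less
  have W: "W \<subseteq> V" and c2W: "2 \<le> card W" and ni: "\<forall>v\<in>W. NW E W v \<noteq> {}"
    and nss: "\<forall>v\<in>W. card {u\<in>NW E W v. u \<in> LW E W} < 2"
    and tight: "\<forall>S. lgN (NW E W) {} S \<longrightarrow> set S \<subseteq> W \<longrightarrow> 3 * length S \<le> 2 * (card W + 1)"
    using less.prems by auto
  have finW: "finite W" using g W unfolding graph_def by (auto intro: finite_subset)
  have Wne: "W \<noteq> {}" using c2W by auto
  have finN: "\<And>v. finite (NW E W v)" using NW_fin[OF finW] .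
  have finL: "finite (LW E W)" by (rule finite_subset[OF LW_sub finW])
  have finS: "finite (SW E W)" by (rule finite_subset[OF SW_sub finW])
  have LS: "card (LW E W) \<le> card (SW E W)" using leaf_supp_card[OF finW nss] .
  obtain x y where xW: "x \<in> W" and xs: "NW E W x = {y}"
    and cas: "2 \<le> card {u\<in>NW E W y. u \<in> LW E W} \<or> card (NW E W y) \<le> 2"
    using good_leaf[OF g ac W Wne ni] by blast
  have yW: "y \<in> W" using xs NW_sub[of E W x] by blast
  have xy: "x \<noteq> y" using xs NW_irr[OF g, of x W] by auto
  have xL: "x \<in> LW E W" using xW xs by (simp add: LW_def)
  have yx: "x \<in> NW E W y" using NW_sym[of y E W x] xs xW by auto
  have xonly: "\<And>v. v \<in> W \<Longrightarrow> x \<in> NW E W v \<Longrightarrow> v = y" using NW_single[OF xs] by blast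
  have ySW: "y \<in> SW E W" using yW yx xL by (auto simp: SW_def)
  have c2y: "card (NW E W y) \<le> 2" using cas nss yW by auto
  have finA: "finite {u\<in>NW E W y. u \<in> LW E W}" using finN by simp
  have onlyleaf: "u = x" if u: "u \<in> NW E W y" "u \<in> LW E W" for u
  proof (rule ccontr)
    assume "u \<noteq> x"
    then have "card {x, u} \<le> card {u\<in>NW E W y. u \<in> LW E W}"
      using u yx xL finA by (intro card_mono) auto
    then show False using nss yW \<open>u \<noteq> x\<close> by auto
  qed
  define W' where "W' = W - {x,y}"
  have W'V: "W' \<subseteq> V" using W W'_def by auto
  have finW': "finite W'" using finW W'_def by simp
  have NW': "\<And>v. NW E W' v = NW E W v - {x,y}" by (simp add: W'_def NW_diff)
  have cW: "card W = card W' + 2"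
  proof -
    have "card W' + card {x,y} = card W" unfolding W'_def using finW xW yW by (intro card_diff_sub) auto
    then show ?thesis using xy by simp
  qed
  have xnot: "\<And>v. v \<in> W \<Longrightarrow> v \<noteq> y \<Longrightarrow> x \<notin> NW E W v" using xonly by blast
  have finL': "finite (LW E W')" "finite (SW E W')"
    by (rule finite_subset[OF LW_sub finW'], rule finite_subset[OF SW_sub finW'])
  have ext: "lgN (NW E W) {} (x # S' @ [y])"
    if S': "lgN (NW E W'') {} S'" "set S' \<subseteq> W''" and W'': "W'' = W - X" "{x,y} \<subseteq> X" for S' W'' X
  proof -
    have lg1: "lgN (NW E W) {y} S'"
      by (rule lgN_mono[OF S'(1), where X = X]) (use W''(2) in \<open>auto simp: W''(1) NW_diff\<close>)
    have lg2: "x \<in> NW E W y - ({y} \<union> \<Union>(NW E W ` set S'))"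
      using yx xy xnot S'(2) W'' by auto
    show ?thesis using lg1 lg2 xs by (auto simp: lgN_append)
  qed
  show ?case
  proof (cases "NW E W y = {x}")
    case True
    show ?thesis
    proof (cases "W' = {}")
      case W'e: True
      then have Wxy: "W = {x,y}" using xW yW W'_def by auto
      have xyE: "{x,y} \<in> E" using yx by (simp add: NW_def nbhd_def)
      have "EW E W = {{x,y}}"
      proof
        show "EW E W \<subseteq> {{x, y}}"
        proof
          fix e assume e: "e \<in> EW E W"
          then have "e \<in> E" "e \<subseteq> {x,y}" using Wxy by (auto simp: EW_def)
          then obtain a b where ab: "e = {a,b}" "a \<noteq> b" using edge_card2[OF g] by blast
          then show "e \<in> {{x,y}}" using \<open>e \<subseteq> {x,y}\<close> by auto
        qed
      next
        show "{{x, y}} \<subseteq> EW E W" using xyE Wxy by (auto simp: EW_def)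
      qed
      then show ?thesis using Wxy in_family_T.P2[OF xy] by simp
    next
      case W'ne: False
      have same: "NW E W' v = NW E W v" if v: "v \<in> W'" for v
      proof -
        have vW: "v \<in> W" "v \<noteq> x" "v \<noteq> y" using v W'_def by auto
        have "x \<notin> NW E W v" using xnot vW by auto
        moreover have "y \<notin> NW E W v"
        proof
          assume "y \<in> NW E W v"
          then have "v \<in> NW E W y" using NW_sym[of y E W v] vW by blast
          then show False using True vW by auto
        qed
        ultimately show ?thesis using NW' by auto
      qed
      have ni': "\<forall>v\<in>W'. NW E W' v \<noteq> {}" using same ni W'_def by auto
      obtain S' where S': "lgN (NW E W') {} S'" "set S' \<subseteq> W'"
        and bd': "2 * (int (card W') + 1 - int (card (LW E W')) + int (card (SW E W'))) \<le> 3 * int (length S')"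
        using forest_lb[OF g ac W'V W'ne ni'] by blast
      have lg: "lgN (NW E W) {} (x # S' @ [y])" using ext[OF S' W'_def] by simp
      have set: "set (x # S' @ [y]) \<subseteq> W" using S'(2) xW yW W'_def by auto
      have yL: "y \<in> LW E W" using True yW by (simp add: LW_def)
      have LWsub: "LW E W' \<subseteq> LW E W - {x,y}"
      proof
        fix v assume v: "v \<in> LW E W'"
        have vW': "v \<in> W'" using v LW_sub[of E W'] by blast
        then show "v \<in> LW E W - {x,y}" using v same[OF vW'] W'_def by (auto simp: LW_def)
      qed
      have SWsub: "SW E W - {x,y} \<subseteq> SW E W'"
      proof
        fix s assume s: "s \<in> SW E W - {x,y}"
        then obtain u where u: "u \<in> NW E W s" "u \<in> LW E W" and sW: "s \<in> W" "s \<noteq> x" "s \<noteq> y"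
          by (auto simp: SW_def)
        have uW: "u \<in> W" using u(2) LW_sub[of E W] by blast
        have ux: "u \<noteq> x" using u(1) sW xonly by auto
        have uy: "u \<noteq> y"
        proof
          assume "u = y"
          then have "s \<in> NW E W y" using NW_sym[OF u(1) sW(1)] by simp
          then show False using True sW by auto
        qed
        have uW': "u \<in> W'" using uW ux uy W'_def by auto
        have sW': "s \<in> W'" using sW W'_def by auto
        have "u \<in> LW E W'" using u(2) same[OF uW'] uW' by (simp add: LW_def)
        then show "s \<in> SW E W'" using u(1) same[OF sW'] sW' uW' by (auto simp: SW_def)
      qed
      have "card (LW E W') \<le> card (LW E W - {x,y})" using LWsub finL by (intro card_mono) auto
      moreover have "card (LW E W - {x,y}) + 2 = card (LW E W)"
        using card_diff_sub[OF finL, of "{x,y}"] xL yL xy by simp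
      moreover have "card (SW E W) \<le> card (SW E W - {x,y}) + card {x,y}"
        using card_le_diff_plus[OF finS] by simp
      moreover have "card (SW E W - {x,y}) \<le> card (SW E W')" using SWsub finL' by (intro card_mono) auto
      ultimately have key: "int (card (LW E W')) - int (card (SW E W')) \<le> int (card (LW E W)) - int (card (SW E W))"
        using xy by simp
      have "3 * length (x # S' @ [y]) \<le> 2 * (card W + 1)" using tight lg set by blast
      then have "3 * int (length S') + 6 \<le> 2 * (int (card W') + 3)" using cW by simp
      moreover have "int (card (LW E W)) \<le> int (card (SW E W))" using LS by simp
      ultimately have False using bd' key by (smt (verit))
      then show ?thesis ..
    qed
  next
    case False
    obtain z where z: "z \<in> NW E W y" "z \<noteq> x" using False yx by blast
    have NWy: "NW E W y = {x,z}"
    proof -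
      have "{x,z} \<subseteq> NW E W y" using z yx by auto
      moreover have "card (NW E W y) \<le> card {x,z}" using c2y z by simp
      ultimately show ?thesis using card_seteq[OF finN[of y]] by (metis order_antisym card_mono)
    qed
    have zW: "z \<in> W" using z NW_sub[of E W y] by blast
    have zy: "z \<noteq> y" using z NW_irr[OF g, of y W] by auto
    have zL: "z \<notin> LW E W" using onlyleaf z by auto
    have yL: "y \<notin> LW E W" using NWy z by (auto simp: LW_def)
    have xS: "x \<notin> SW E W" using xs yL by (auto simp: SW_def)
    have zW': "z \<in> W'" using zW z zy W'_def by auto
    have W'ne: "W' \<noteq> {}" using zW' by auto
    have ni': "\<forall>v\<in>W'. NW E W' v \<noteq> {}"
    proof
      fix v assume v: "v \<in> W'"
      have vW: "v \<in> W" "v \<noteq> x" "v \<noteq> y" using v W'_def by auto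
      have xn: "x \<notin> NW E W v" using xnot vW by auto
      show "NW E W' v \<noteq> {}"
      proof (cases "y \<in> NW E W v")
        case True
        have "v \<in> NW E W y" using NW_sym[OF True vW(1)] .
        then have "v \<notin> LW E W" using onlyleaf vW by auto
        then have "card (NW E W v) \<noteq> 1" using vW by (simp add: LW_def)
        then have "2 \<le> card (NW E W v)" using card_ne01[OF finN] ni vW by auto
        then obtain w where "w \<in> NW E W v" "w \<noteq> y" using card_ge2_obtain[OF finN _ True] by blast
        then show ?thesis using xn NW' by auto
      next
        case False
        then show ?thesis using xn NW' ni vW by auto
      qed
    qed
    obtain S' where S': "lgN (NW E W') {} S'" "set S' \<subseteq> W'"
      and bd': "2 * (int (card W') + 1 - int (card (LW E W')) + int (card (SW E W'))) \<le> 3 * int (length S')"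
      using forest_lb[OF g ac W'V W'ne ni'] by blast
    have lg: "lgN (NW E W) {} (x # S' @ [y])" using ext[OF S' W'_def] by simp
    have set: "set (x # S' @ [y]) \<subseteq> W" using S'(2) xW yW W'_def by auto
    have "3 * length (x # S' @ [y]) \<le> 2 * (card W + 1)" using tight lg set by blast
    then have "3 * int (length S') + 6 \<le> 2 * (int (card W') + 3)" using cW by simp
    then have LgS: "int (card (SW E W')) + 1 \<le> int (card (LW E W'))" using bd' by (smt (verit))
    have LWsub: "LW E W' \<subseteq> (LW E W - {x}) \<union> {z}"
    proof
      fix v assume v: "v \<in> LW E W'"
      have vW: "v \<in> W" "v \<noteq> x" "v \<noteq> y" using v LW_sub[of E W'] W'_def by auto
      show "v \<in> (LW E W - {x}) \<union> {z}"
      proof (cases "y \<in> NW E W v")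
        case True
        then show ?thesis using NW_sym[OF True vW(1)] vW NWy by auto
      next
        case False
        then have "NW E W' v = NW E W v" using xnot vW NW' by auto
        then show ?thesis using v vW by (auto simp: LW_def)
      qed
    qed
    have SWsub: "SW E W - {y} \<subseteq> SW E W'"
    proof
      fix s assume s: "s \<in> SW E W - {y}"
      then obtain u where u: "u \<in> NW E W s" "u \<in> LW E W" and sW: "s \<in> W" "s \<noteq> y"
        by (auto simp: SW_def)
      have sx: "s \<noteq> x" using s xS by auto
      have uW: "u \<in> W" using u(2) LW_sub[of E W] by blast
      have ux: "u \<noteq> x" using u(1) sW xonly by auto
      have uy: "u \<noteq> y" using u yL by auto
      have "y \<notin> NW E W u"
      proof
        assume "y \<in> NW E W u"
        then have "u \<in> NW E W y" using NW_sym[of y E W u] uW by blast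
        then show False using onlyleaf u ux by auto
      qed
      then have "NW E W' u = NW E W u" using xnot uW uy NW' by auto
      then have "u \<in> LW E W'" using u uW ux uy W'_def by (simp add: LW_def)
      then show "s \<in> SW E W'" using u ux uy sW sx W'_def NW' by (auto simp: SW_def)
    qed
    have cL: "card (LW E W') \<le> card (LW E W)"
    proof -
      have "card (LW E W') \<le> card ((LW E W - {x}) \<union> {z})" using LWsub finL by (intro card_mono) auto
      also have "\<dots> \<le> card (LW E W - {x}) + card {z}" by (rule card_Un_le)
      also have "\<dots> = card (LW E W)" using card_Suc_Diff1[OF finL xL] by simp
      finally show ?thesis .
    qed
    have cS: "card (SW E W - {y}) + 1 = card (SW E W)" using card_Suc_Diff1[OF finS ySW] by simp
    have zL': "z \<in> LW E W'"
    proof (rule ccontr)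
      assume "z \<notin> LW E W'"
      then have "LW E W' \<subseteq> LW E W - {x}" using LWsub by auto
      then have "card (LW E W') \<le> card (LW E W - {x})" using finL by (intro card_mono) auto
      then have "card (LW E W') + 1 \<le> card (LW E W)" using card_Suc_Diff1[OF finL xL] by simp
      moreover have "card (SW E W - {y}) \<le> card (SW E W')" using SWsub finL' by (intro card_mono) auto
      ultimately show False using LgS LS cS by linarith
    qed
    then have "card (NW E W' z) = 1" by (simp add: LW_def)
    then obtain w where w: "NW E W' z = {w}" by (rule card_1_singletonE)
    have wW': "w \<in> W'" using w NW_sub[of E W' z] by blast
    have wW: "w \<in> W" "w \<noteq> x" "w \<noteq> y" using wW' W'_def by auto
    have yz: "y \<in> NW E W z" using NW_sym[OF z(1) yW] .
    have xz: "x \<notin> NW E W z" using xnot zW zy by auto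
    have NWz: "NW E W z = {y,w}" using w NW' yz xz by auto
    have zw: "z \<noteq> w" using NW_irr[OF g, of z W] NWz by auto
    have wz: "z \<in> NW E W w" using NW_sym[of w E W z] NWz zW by auto
    have wS: "w \<in> SW E W"
    proof (rule ccontr)
      assume wn: "w \<notin> SW E W"
      have "z \<in> NW E W' w" using wz NW' z(2) zy by auto
      then have "w \<in> SW E W'" using wW' zL' by (auto simp: SW_def)
      then have "insert w (SW E W - {y}) \<subseteq> SW E W'" using SWsub by auto
      then have "card (insert w (SW E W - {y})) \<le> card (SW E W')" using finL' by (intro card_mono) auto
      then have "card (SW E W - {y}) + 1 \<le> card (SW E W')" using wn finS by simp
      then show False using LgS LS cS cL by linarith
    qed
    then obtain u where u: "u \<in> NW E W w" "u \<in> LW E W" by (auto simp: SW_def)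
    have uW: "u \<in> W" using u(2) LW_sub[of E W] by blast
    have uz: "u \<noteq> z" using u zL by auto
    have uy: "u \<noteq> y" using u yL by auto
    have ux: "u \<noteq> x" using u(1) xonly wW by auto
    have uw: "u \<noteq> w" using u(1) NW_irr[OF g, of w W] by auto
    have wu: "w \<in> NW E W u" using NW_sym[OF u(1) wW(1)] .
    have NWu: "NW E W u = {w}"
    proof -
      have "card (NW E W u) = 1" using u(2) by (simp add: LW_def)
      then obtain t where "NW E W u = {t}" by (rule card_1_singletonE)
      then show ?thesis using wu by simp
    qed
    define W'' where "W'' = W - {x,y,z}"
    have W''V: "W'' \<subseteq> V" using W W''_def by auto
    have NW'': "\<And>v. NW E W'' v = NW E W v - {x,y,z}" by (simp add: W''_def NW_diff)
    have uW'': "u \<in> W''" and wW'': "w \<in> W''" using uW ux uy uz wW zw W''_def by auto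
    have cW'': "card W = card W'' + 3"
    proof -
      have "card W'' + card {x,y,z} = card W" unfolding W''_def using finW xW yW zW by (intro card_diff_sub) auto
      then show ?thesis using xy z(2) zy by simp
    qed
    have same'': "NW E W'' v = NW E W v" if v: "v \<in> W''" "v \<noteq> w" for v
    proof -
      have vW: "v \<in> W" "v \<noteq> x" "v \<noteq> y" "v \<noteq> z" using v W''_def by auto
      have "x \<notin> NW E W v" using xnot vW by auto
      moreover have "y \<notin> NW E W v"
      proof
        assume "y \<in> NW E W v"
        then have "v \<in> NW E W y" using NW_sym[of y E W v] vW by blast
        then show False using NWy vW by auto
      qed
      moreover have "z \<notin> NW E W v"
      proof
        assume "z \<in> NW E W v"
        then have "v \<in> NW E W z" using NW_sym[of z E W v] vW by blast
        then show False using NWz vW v(2) by auto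
      qed
      ultimately show ?thesis using NW'' by auto
    qed
    have NWu'': "NW E W'' u = {w}" using NWu NW'' wW zw by auto
    have c2'': "2 \<le> card W''"
    proof -
      have "card {u,w} \<le> card W''" using uW'' wW'' finW W''_def by (intro card_mono) auto
      then show ?thesis using uw by simp
    qed
    have ni'': "\<forall>v\<in>W''. NW E W'' v \<noteq> {}"
    proof
      fix v assume v: "v \<in> W''"
      show "NW E W'' v \<noteq> {}"
      proof (cases "v = w")
        case True
        have "w \<in> NW E W'' u" using NWu'' by simp
        then have "u \<in> NW E W'' w" using NW_sym[of w E W'' u] uW'' by blast
        then show ?thesis using True by auto
      next
        case False
        then show ?thesis using same''[OF v False] ni v W''_def by auto
      qed
    qed
    have nss'': "\<forall>v\<in>W''. card {a\<in>NW E W'' v. a \<in> LW E W''} < 2"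
    proof
      fix v assume v: "v \<in> W''"
      have fin'': "finite (NW E W'' v)" using NW_fin finW W''_def by (metis finite_Diff)
      show "card {a\<in>NW E W'' v. a \<in> LW E W''} < 2"
      proof (cases "v = u")
        case True
        have "card {a\<in>NW E W'' v. a \<in> LW E W''} \<le> card {w}"
          using NWu'' True by (intro card_mono) auto
        then show ?thesis by simp
      next
        case False
        have sub: "{a\<in>NW E W'' v. a \<in> LW E W''} \<subseteq> {a\<in>NW E W v. a \<in> LW E W}"
        proof
          fix a assume a: "a \<in> {a\<in>NW E W'' v. a \<in> LW E W''}"
          then have aN: "a \<in> NW E W'' v" and aL: "a \<in> LW E W''" by auto
          have aW'': "a \<in> W''" using aN NW_sub[of E W'' v] by blast
          have aw: "a \<noteq> w"
          proof
            assume "a = w"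
            then have "card (NW E W'' w) = 1" using aL by (simp add: LW_def)
            moreover have "v \<in> NW E W'' w" using NW_sym[of a E W'' v] aN v \<open>a = w\<close> by blast
            moreover have "u \<in> NW E W'' w" using NW_sym[of w E W'' u] NWu'' uW'' by auto
            ultimately show False using False by (metis card_1_singletonE singletonD)
          qed
          have "a \<in> LW E W" using aL same''[OF aW'' aw] aW'' W''_def by (simp add: LW_def)
          moreover have "a \<in> NW E W v" using aN NW'' by auto
          ultimately show "a \<in> {a\<in>NW E W v. a \<in> LW E W}" by simp
        qed
        have "finite {a\<in>NW E W v. a \<in> LW E W}" using finN by simp
        then have "card {a\<in>NW E W'' v. a \<in> LW E W''} \<le> card {a\<in>NW E W v. a \<in> LW E W}"
          using sub by (rule card_mono)
        also have "\<dots> < 2" using nss v W''_def by auto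
        finally show ?thesis .
      qed
    qed
    have tight'': "\<forall>S. lgN (NW E W'') {} S \<longrightarrow> set S \<subseteq> W'' \<longrightarrow> 3 * length S \<le> 2 * (card W'' + 1)"
    proof (intro allI impI)
      fix S assume S: "lgN (NW E W'') {} S" "set S \<subseteq> W''"
      have lg: "lgN (NW E W) {} (x # S @ [y])" using ext[OF S W''_def] by simp
      have "set (x # S @ [y]) \<subseteq> W" using S(2) xW yW W''_def by auto
      then have "3 * length (x # S @ [y]) \<le> 2 * (card W + 1)" using tight lg by blast
      then show "3 * length S \<le> 2 * (card W'' + 1)" using cW'' by simp
    qed
    have "card W'' < card W" using cW'' by simp
    then have fam: "in_family_T W'' (EW E W'')"
      using less.hyps[of W''] W''V c2'' ni'' nss'' tight'' by blast
    have supp: "support_vertex (EW E W'') w"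
      unfolding support_vertex_def leaf_def nbhd_EW
      using wW'' uW'' NWu'' NW_sym[of w E W'' u] by (intro bexI[of _ u]) auto
    have fam2: "in_family_T (W'' \<union> {z, y, x}) (EW E W'' \<union> {{w, z}, {z, y}, {y, x}})"
      by (rule in_family_T.O1[OF fam wW'' supp]) (use W''_def xy z(2) zy in auto)
    have Weq: "W'' \<union> {z, y, x} = W" using W''_def xW yW zW by auto
    have Eeq: "EW E W'' \<union> {{w, z}, {z, y}, {y, x}} = EW E W"
    proof
      have e1: "{w,z} \<in> E" using wz by (simp add: NW_def nbhd_def insert_commute)
      have e2: "{z,y} \<in> E" using z(1) by (simp add: NW_def nbhd_def)
      have "y \<in> NW E W x" using xs by simp
      then have e3: "{y,x} \<in> E" by (simp add: NW_def nbhd_def)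
      show "EW E W'' \<union> {{w, z}, {z, y}, {y, x}} \<subseteq> EW E W"
        using e1 e2 e3 wW zW yW xW W''_def by (auto simp: EW_def)
    next
      show "EW E W \<subseteq> EW E W'' \<union> {{w, z}, {z, y}, {y, x}}"
      proof
        fix e assume e: "e \<in> EW E W"
        then have eE: "e \<in> E" and eW: "e \<subseteq> W" by (auto simp: EW_def)
        show "e \<in> EW E W'' \<union> {{w, z}, {z, y}, {y, x}}"
        proof (cases "x \<in> e \<or> y \<in> e \<or> z \<in> e")
          case False
          then show ?thesis using eE eW W''_def by (auto simp: EW_def)
        next
          case True
          then obtain a where a: "a \<in> e" "a \<in> {x,y,z}" by auto
          obtain b where b: "e = {a,b}" "b \<in> nbhd E a" using edge_other[OF g eE a(1)] by blast
          have "b \<in> NW E W a" using b eW by (auto simp: NW_def)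
          then show ?thesis using a(2) b(1) xs NWy NWz by (auto simp: insert_commute)
        qed
      qed
    qed
    show ?thesis using fam2 Weq Eeq by simp
  qed
qed



lemma fam_basic: "in_family_T V E \<Longrightarrow> finite V \<and> (\<forall>e\<in>E. e \<subseteq> V)"
  by (induction rule: in_family_T.induct) auto

definition Inv :: "'a set \<Rightarrow> 'a set set \<Rightarrow> bool" where
  "Inv V E \<longleftrightarrow> (\<exists>a b. a \<noteq> b \<and> V = {a,b} \<and> E = {{a,b}}) \<or>
     (\<exists>J. J \<subseteq> V \<and> 3 * card J = card V + 1 \<and> (\<forall>x\<in>V-J. nbhd E x \<subseteq> J)
        \<and> (\<forall>w\<in>V. support_vertex E w \<longrightarrow> w \<in> J))"

lemma fam_inv_step:
  assumes fb: "finite V" "\<forall>e\<in>E. e \<subseteq> V" and IH: "Inv V E"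
    and v: "v \<in> V" "support_vertex E v"
    and new: "v1 \<notin> V" "v2 \<notin> V" "v3 \<notin> V" "v1 \<noteq> v2" "v1 \<noteq> v3" "v2 \<noteq> v3"
  shows "Inv (V \<union> {v1, v2, v3}) (E \<union> {{v, v1}, {v1, v2}, {v2, v3}})"
proof -
  define V2 where "V2 = V \<union> {v1, v2, v3}"
  define E2 where "E2 = E \<union> {{v, v1}, {v1, v2}, {v2, v3}}"
  have vne: "v \<noteq> v1" "v \<noteq> v2" "v \<noteq> v3" using v new by auto
  have nbV: "nbhd E a \<subseteq> V" for a using fb(2) by (auto simp: nbhd_def)
  have finnb: "finite (nbhd E a)" for a using nbV fb(1) by (rule finite_subset)
  have nb_old: "nbhd E2 a = nbhd E a" if a: "a \<in> V" "a \<noteq> v" for a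
    using a new unfolding E2_def nbhd_def by (auto simp: doubleton_eq_iff)
  have nb_v: "nbhd E2 v = insert v1 (nbhd E v)"
    using v new unfolding E2_def nbhd_def by (auto simp: doubleton_eq_iff)
  have nb_v1: "nbhd E2 v1 = {v, v2}"
    using v new fb(2) unfolding E2_def nbhd_def by (auto simp: doubleton_eq_iff)
  have nb_v2: "nbhd E2 v2 = {v1, v3}"
    using v new fb(2) unfolding E2_def nbhd_def by (auto simp: doubleton_eq_iff)
  have nb_v3: "nbhd E2 v3 = {v2}"
    using v new fb(2) unfolding E2_def nbhd_def by (auto simp: doubleton_eq_iff)
  have nl1: "\<not> leaf E2 v1" using nb_v1 vne by (simp add: leaf_def)
  have nl2: "\<not> leaf E2 v2" using nb_v2 new by (simp add: leaf_def)
  have nbne: "nbhd E v \<noteq> {}" using v(2) by (auto simp: support_vertex_def)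
  have nlv: "\<not> leaf E2 v"
  proof -
    obtain t where t: "t \<in> nbhd E v" using nbne by auto
    have "t \<noteq> v1" using t nbV new by auto
    then have "card {v1, t} \<le> card (nbhd E2 v)" using t nb_v finnb by (intro card_mono) auto
    then show ?thesis using \<open>t \<noteq> v1\<close> by (simp add: leaf_def)
  qed
  have inV2: "u \<in> V2" if "u \<in> nbhd E2 w" for u w
  proof -
    have e: "{u,w} \<in> E2" using that by (simp add: nbhd_def)
    show ?thesis
    proof (cases "{u,w} \<in> E")
      case True
      then show ?thesis using fb(2) V2_def by auto
    next
      case False
      then have "{u,w} = {v, v1} \<or> {u,w} = {v1, v2} \<or> {u,w} = {v2, v3}" using e E2_def by auto
      then have "u \<in> {v, v1, v2, v3}" by (auto simp: doubleton_eq_iff)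
      then show ?thesis using v(1) V2_def by auto
    qed
  qed
  have cV2: "card V2 = card V + 3" using fb(1) new unfolding V2_def by simp
  have sym2: "w \<in> nbhd E2 u" if "u \<in> nbhd E2 w" for u w using that by (simp add: nbhd_def insert_commute)
  have supp_cases: "w = v2 \<or> (w \<in> V \<and> support_vertex E w) \<or> w = v"
    if w: "support_vertex E2 w" for w
  proof -
    obtain u where u: "u \<in> nbhd E2 w" "leaf E2 u" using w by (auto simp: support_vertex_def)
    have wu: "w \<in> nbhd E2 u" using sym2[OF u(1)] .
    have uV2: "u \<in> V2" using inV2[OF u(1)] .
    show ?thesis
    proof (cases "u \<in> V")
      case True
      show ?thesis
      proof (cases "u = v")
        case True
        then show ?thesis using nlv u by simp
      next
        case False
        have eq: "nbhd E2 u = nbhd E u" using nb_old[OF \<open>u \<in> V\<close> False] .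
        then have "w \<in> nbhd E u" using wu by simp
        then have "w \<in> V" "u \<in> nbhd E w" using nbV by (auto simp: nbhd_def insert_commute)
        moreover have "leaf E u" using u(2) eq by (simp add: leaf_def)
        ultimately show ?thesis by (auto simp: support_vertex_def)
      qed
    next
      case False
      then have "u = v1 \<or> u = v2 \<or> u = v3" using uV2 V2_def by auto
      then have "u = v3" using nl1 nl2 u(2) by auto
      then show ?thesis using wu nb_v3 by auto
    qed
  qed
  from IH show ?thesis unfolding Inv_def
  proof (elim disjE exE conjE)
    fix a b assume ab: "a \<noteq> b" "V = {a,b}" "E = {{a,b}}"
    obtain c where c: "V = {v, c}" "c \<noteq> v" using ab v(1) by auto
    have nbc: "nbhd E c = {v}" using c ab by (auto simp: nbhd_def doubleton_eq_iff)
    have nbvE: "nbhd E v = {c}" using c ab by (auto simp: nbhd_def doubleton_eq_iff)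
    define J where "J = {v, v2}"
    have "J \<subseteq> V2" using J_def V2_def v by auto
    moreover have "3 * card J = card V2 + 1" using J_def cV2 vne c by simp
    moreover have "\<forall>x\<in>V2-J. nbhd E2 x \<subseteq> J"
    proof
      fix x assume x: "x \<in> V2 - J"
      then have "x = c \<or> x = v1 \<or> x = v3" using c V2_def J_def by auto
      then show "nbhd E2 x \<subseteq> J"
        using nb_old[of c] nbc c nb_v1 nb_v3 J_def by auto
    qed
    moreover have "\<forall>w\<in>V2. support_vertex E2 w \<longrightarrow> w \<in> J"
    proof (intro ballI impI)
      fix w assume w: "w \<in> V2" "support_vertex E2 w"
      obtain u where u: "u \<in> nbhd E2 w" "leaf E2 u" using w by (auto simp: support_vertex_def)
      have wu: "w \<in> nbhd E2 u" using sym2[OF u(1)] .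
      have uV2: "u \<in> V2" using inV2[OF u(1)] .
      have "nbhd E2 v = {v1, c}" using nb_v nbvE by auto
      then have "\<not> leaf E2 v" using c new by (simp add: leaf_def)
      then have "u = c \<or> u = v3" using uV2 u(2) nl1 nl2 c V2_def by auto
      then show "w \<in> J" using wu nb_old[of c] c nbc nb_v3 J_def by auto
    qed
    ultimately show "(\<exists>a b. a \<noteq> b \<and> V \<union> {v1, v2, v3} = {a, b} \<and>
          E \<union> {{v, v1}, {v1, v2}, {v2, v3}} = {{a, b}}) \<or>
     (\<exists>J\<subseteq>V \<union> {v1, v2, v3}. 3 * card J = card (V \<union> {v1, v2, v3}) + 1 \<and>
          (\<forall>x\<in>V \<union> {v1, v2, v3} - J. nbhd (E \<union> {{v, v1}, {v1, v2}, {v2, v3}}) x \<subseteq> J) \<and>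
          (\<forall>w\<in>V \<union> {v1, v2, v3}. support_vertex (E \<union> {{v, v1}, {v1, v2}, {v2, v3}}) w \<longrightarrow> w \<in> J))"
      unfolding V2_def E2_def by blast
  next
    fix J assume J: "J \<subseteq> V" "3 * card J = card V + 1" "\<forall>x\<in>V-J. nbhd E x \<subseteq> J"
      "\<forall>w\<in>V. support_vertex E w \<longrightarrow> w \<in> J"
    have vJ: "v \<in> J" using J(4) v by auto
    define J2 where "J2 = insert v2 J"
    have finJ: "finite J" using J(1) fb(1) by (rule finite_subset)
    have "J2 \<subseteq> V2" using J2_def V2_def J(1) by auto
    moreover have "3 * card J2 = card V2 + 1"
    proof -
      have "v2 \<notin> J" using J(1) new by auto
      then have "card J2 = Suc (card J)" using finJ J2_def by simp
      then show ?thesis using cV2 J(2) by simp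
    qed
    moreover have "\<forall>x\<in>V2-J2. nbhd E2 x \<subseteq> J2"
    proof
      fix x assume x: "x \<in> V2 - J2"
      show "nbhd E2 x \<subseteq> J2"
      proof (cases "x \<in> V")
        case True
        then have "x \<noteq> v" using vJ x J2_def by auto
        then show ?thesis using nb_old[OF True] J(3) True x J2_def by auto
      next
        case False
        then have "x = v1 \<or> x = v3" using x V2_def J2_def by auto
        then show ?thesis using nb_v1 nb_v3 vJ J2_def by auto
      qed
    qed
    moreover have "\<forall>w\<in>V2. support_vertex E2 w \<longrightarrow> w \<in> J2"
      using supp_cases J(4) vJ J2_def by blast
    ultimately show "(\<exists>a b. a \<noteq> b \<and> V \<union> {v1, v2, v3} = {a, b} \<and>
          E \<union> {{v, v1}, {v1, v2}, {v2, v3}} = {{a, b}}) \<or>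
     (\<exists>J\<subseteq>V \<union> {v1, v2, v3}. 3 * card J = card (V \<union> {v1, v2, v3}) + 1 \<and>
          (\<forall>x\<in>V \<union> {v1, v2, v3} - J. nbhd (E \<union> {{v, v1}, {v1, v2}, {v2, v3}}) x \<subseteq> J) \<and>
          (\<forall>w\<in>V \<union> {v1, v2, v3}. support_vertex (E \<union> {{v, v1}, {v1, v2}, {v2, v3}}) w \<longrightarrow> w \<in> J))"
      unfolding V2_def E2_def by blast
  qed
qed

lemma fam_inv: "in_family_T V E \<Longrightarrow> Inv V E"
proof (induction rule: in_family_T.induct)
  case (P2 a b)
  then show ?case unfolding Inv_def by blast
next
  case (O1 V E v v1 v2 v3)
  have fb: "finite V" "\<forall>e\<in>E. e \<subseteq> V" using fam_basic[OF O1.hyps(1)] by auto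
  show ?case by (rule fam_inv_step[OF fb O1.IH O1.hyps(2,3) O1.hyps(4-9)])
qed

lemma fam_J: "in_family_T V E \<Longrightarrow> \<exists>J. J \<subseteq> V \<and> 3 * card J = card V + 1 \<and> (\<forall>x\<in>V-J. nbhd E x \<subseteq> J)"
proof -
  assume f: "in_family_T V E"
  from fam_inv[OF f] show ?thesis unfolding Inv_def
  proof (elim disjE exE conjE)
    fix a b assume ab: "a \<noteq> b" "V = {a,b}" "E = {{a,b}}"
    have "nbhd E b = {a}" using ab by (auto simp: nbhd_def doubleton_eq_iff)
    then show ?thesis using ab by (intro exI[of _ "{a}"]) auto
  qed blast
qed

lemma fam_bound:
  assumes f: "in_family_T V E" and S: "lgN (nbhd E) {} S" "set S \<subseteq> V"
  shows "3 * length S \<le> 2 * (card V + 1)"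
proof -
  obtain J where J: "J \<subseteq> V" "3 * card J = card V + 1" "\<forall>x\<in>V-J. nbhd E x \<subseteq> J"
    using fam_J[OF f] by blast
  have finV: "finite V" using fam_basic[OF f] by blast
  have finJ: "finite J" using J(1) finV by (rule finite_subset)
  obtain fp where fp: "inj_on fp (set S)" "\<forall>z\<in>set S. fp z \<in> nbhd E z \<and> fp z \<notin> {}"
    using lgN_footprint[OF S(1)] by blast
  have "fp ` (set S - J) \<subseteq> J" using fp(2) J(3) S(2) by auto
  moreover have "inj_on fp (set S - J)" using fp(1) by (rule inj_on_subset) auto
  ultimately have c1: "card (set S - J) \<le> card J" using card_inj_on_le finJ by blast
  have "card (set S) \<le> card (set S - J) + card J" using card_le_diff_plus[OF _ finJ] by simp
  moreover have "length S = card (set S)" using lgN_distinct[OF S(1)] by (simp add: distinct_card)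
  ultimately have "length S \<le> 2 * card J" using c1 by linarith
  then have "3 * length S \<le> 2 * (3 * card J)" by linarith
  then show ?thesis using J(2) by simp
qed



lemma conn_noiso:
  assumes g: "graph V E" and c: "connected_graph V E" and c2: "card V \<ge> 2"
  shows "\<forall>v\<in>V. nbhd E v \<noteq> {}"
proof
  fix v assume v: "v \<in> V"
  have finV: "finite V" using g graph_def by auto
  have "card (V - {v}) \<noteq> 0" using c2 v finV by (simp add: card_Diff_singleton)
  then obtain u where u: "u \<in> V" "u \<noteq> v" by (metis Diff_iff card.empty equals0I singletonI)
  have "(adj E)\<^sup>*\<^sup>* v u" using c u v unfolding connected_graph_def by auto
  then obtain w where "adj E v w" using u(2) by (metis converse_rtranclpE)
  then have "w \<in> nbhd E v" by (simp add: adj_def nbhd_def insert_commute)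
  then show "nbhd E v \<noteq> {}" by auto
qed

theorem mainTheorem11:
  fixes V :: "'a set" and E :: "'a set set"
  assumes "is_tree V E"
    and "card V \<ge> 2"
    and "\<forall>v\<in>V. \<not> strong_support_vertex E v"
  shows "real (grundy_total_domination V E) \<ge> 2 / 3 * (real (card V) + 1)
    \<and> (real (grundy_total_domination V E) = 2 / 3 * (real (card V) + 1)
         \<longleftrightarrow> in_family_T V E)"
proof -
  have g: "graph V E" and conn: "connected_graph V E" and Vne: "V \<noteq> {}"
    and cE: "card E = card V - 1" using assms(1) unfolding is_tree_def by auto
  have finV: "finite V" using g graph_def by auto
  have cE': "card E + 1 = card V" using cE assms(2) by simp
  have ac: "acyc V E" using tree_acyc[OF g conn Vne cE'] .
  have ni: "\<forall>v\<in>V. nbhd E v \<noteq> {}" using conn_noiso[OF g conn assms(2)] .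
  have NWV: "NW E V = nbhd E" using nbhd_sub[OF g] by (auto simp: NW_def fun_eq_iff)
  have EWV: "EW E V = E" using g unfolding EW_def graph_def by auto
  have ni': "\<forall>v\<in>V. NW E V v \<noteq> {}" using ni NWV by simp
  have LWV: "LW E V = {v\<in>V. leaf E v}" using NWV by (simp add: LW_def leaf_def)
  have nss: "\<forall>v\<in>V. card {u\<in>NW E V v. u \<in> LW E V} < 2"
  proof
    fix v assume v: "v \<in> V"
    have "{u\<in>NW E V v. u \<in> LW E V} = {u\<in>nbhd E v. leaf E u}"
      using NWV LWV nbhd_sub[OF g, of v] by auto
    then show "card {u\<in>NW E V v. u \<in> LW E V} < 2"
      using assms(3) v unfolding strong_support_vertex_def by auto
  qed
  have LS: "card (LW E V) \<le> card (SW E V)" using leaf_supp_card[OF finV nss] .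
  obtain S where S: "lgN (NW E V) {} S" "set S \<subseteq> V"
    and bd: "2 * (int (card V) + 1 - int (card (LW E V)) + int (card (SW E V))) \<le> 3 * int (length S)"
    using forest_lb[OF g ac order_refl Vne ni'] by blast
  have "int (card (LW E V)) \<le> int (card (SW E V))" using LS by simp
  then have "2 * (int (card V) + 1) \<le> 3 * int (length S)" using bd by (smt (verit))
  then have "int (2 * (card V + 1)) \<le> int (3 * length S)" by simp
  then have bdS: "2 * (card V + 1) \<le> 3 * length S" by (simp only: of_nat_le_iff)
  define A where "A = {length S | S. total_dominating_sequence V E S}"
  have Afin: "finite A"
  proof -
    have "A \<subseteq> {..card V}"
    proof
      fix n assume "n \<in> A"
      then obtain T where T: "total_dominating_sequence V E T" "n = length T" using A_def by blast
      then have "distinct T" "set T \<subseteq> V"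
        unfolding total_dominating_sequence_def legal_sequence_def by auto
      then have "length T \<le> card V" using finV by (metis card_mono distinct_card)
      then show "n \<in> {..card V}" using T by simp
    qed
    then show ?thesis by (rule finite_subset) simp
  qed
  have ext: "\<exists>T. total_dominating_sequence V E T \<and> length S' \<le> length T"
    if "lgN (nbhd E) {} S'" "set S' \<subseteq> V" for S'
    using extend_tds[OF g ni that(2) that(1)] .
  obtain S2 where S2: "total_dominating_sequence V E S2" "length S \<le> length S2"
    using ext S NWV by auto
  have Ane: "A \<noteq> {}" using S2 A_def by auto
  have G: "grundy_total_domination V E = Max A" unfolding grundy_total_domination_def A_def ..
  have ub: "length T \<le> grundy_total_domination V E" if "total_dominating_sequence V E T" for T
    using that G Afin A_def by (auto intro: Max_ge)
  obtain Sst where Sst: "total_dominating_sequence V E Sst" "length Sst = grundy_total_domination V E"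
    using Max_in[OF Afin Ane] G A_def by auto
  have Sst_lg: "lgN (nbhd E) {} Sst" "set Sst \<subseteq> V"
    using Sst(1) legal_iff[OF g ni] unfolding total_dominating_sequence_def by auto
  have geq: "2 * (card V + 1) \<le> 3 * grundy_total_domination V E"
    using bdS S2 ub[OF S2(1)] by linarith
  have part1: "real (grundy_total_domination V E) \<ge> 2 / 3 * (real (card V) + 1)"
  proof -
    have "real (2 * (card V + 1)) \<le> real (3 * grundy_total_domination V E)" using geq by linarith
    then show ?thesis by simp
  qed
  have part2: "real (grundy_total_domination V E) = 2 / 3 * (real (card V) + 1) \<longleftrightarrow> in_family_T V E"
  proof
    assume eq: "real (grundy_total_domination V E) = 2 / 3 * (real (card V) + 1)"
    then have "real (3 * grundy_total_domination V E) = real (2 * (card V + 1))" by simp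
    then have eqn: "3 * grundy_total_domination V E = 2 * (card V + 1)" by linarith
    have tight: "\<forall>S. lgN (NW E V) {} S \<longrightarrow> set S \<subseteq> V \<longrightarrow> 3 * length S \<le> 2 * (card V + 1)"
    proof (intro allI impI)
      fix T assume T: "lgN (NW E V) {} T" "set T \<subseteq> V"
      obtain T2 where T2: "total_dominating_sequence V E T2" "length T \<le> length T2"
        using ext T NWV by auto
      then show "3 * length T \<le> 2 * (card V + 1)" using ub[OF T2(1)] eqn by linarith
    qed
    have "in_family_T V (EW E V)"
      using eq_family[OF g ac order_refl assms(2) ni' nss tight] .
    then show "in_family_T V E" using EWV by simp
  next
    assume f: "in_family_T V E"
    have "3 * length Sst \<le> 2 * (card V + 1)" using fam_bound[OF f Sst_lg] .
    then have "3 * grundy_total_domination V E = 2 * (card V + 1)" using geq Sst(2) by linarith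
    then have "real (3 * grundy_total_domination V E) = real (2 * (card V + 1))" by simp
    then show "real (grundy_total_domination V E) = 2 / 3 * (real (card V) + 1)" by simp
  qed
  show ?thesis using part1 part2 by blast
qed

end
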